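(* Let $\beta>0$ and let $L:(0,\infty)\to(0,\infty)$ be slowly varying at $\infty$ with $n\mapsto L(e^n)$ ultimately monotonically increasing. For all sufficiently large $y$, let $n\ge2$ be the integer with $n-1+\frac{1}{2\beta}\log L(e^{2n-2})\le y<n+\frac{1}{2\beta}\log L(e^{2n})$, and define \[ g_1(y)=\begin{cases} n-1, & \text{if } n-1+\frac{1}{2\beta}\log L(e^{2n-2})\le y<n-1+\frac1{2\beta}\log L(e^{2n}),\\ y-\frac{1}{2\beta}\log L(e^{2n}), & \text{if } n-1+\frac1{2\beta}\log L(e^{2n})\le y<n+\frac1{2\beta}\log L(e^{2n}),\end{cases} \] and $\tilde g_1(y)=y-\frac{1}{2\beta}\log L(e^{2n-2})$. Then $\tilde g_1(y)-g_1(y)\to0$ as $y\to\infty$. *)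

theory Defs
  imports Complex_Main
begin

definition slowly_varying :: "(real \<Rightarrow> real) \<Rightarrow> bool" where
  "slowly_varying L \<longleftrightarrow> (\<forall>lam>0. ((\<lambda>x. L (lam * x) / L x) \<longlongrightarrow> 1) at_top)"

definition lowpt :: "real \<Rightarrow> (real \<Rightarrow> real) \<Rightarrow> nat \<Rightarrow> real" where
  "lowpt \<beta> L n = real n - 1 + ln (L (exp (2 * real n - 2))) / (2 * \<beta>)"

definition idx :: "real \<Rightarrow> (real \<Rightarrow> real) \<Rightarrow> real \<Rightarrow> nat" where
  "idx \<beta> L y = (THE n. 2 \<le> n \<and> lowpt \<beta> L n \<le> y \<and> y < lowpt \<beta> L (n + 1))"

definition g1 :: "real \<Rightarrow> (real \<Rightarrow> real) \<Rightarrow> real \<Rightarrow> real" where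
  "g1 \<beta> L y = (let n = idx \<beta> L y in
     if y < real n - 1 + ln (L (exp (2 * real n))) / (2 * \<beta>) then real n - 1
     else y - ln (L (exp (2 * real n))) / (2 * \<beta>))"

definition g1_tilde :: "real \<Rightarrow> (real \<Rightarrow> real) \<Rightarrow> real \<Rightarrow> real" where
  "g1_tilde \<beta> L y = (let n = idx \<beta> L y in y - ln (L (exp (2 * real n - 2))) / (2 * \<beta>))"

end

theory Submission
  imports Defs "HOL-Real_Asymp.Real_Asymp"
begin

theorem lemmaA1:
  fixes \<beta> :: real and L :: "real \<Rightarrow> real"
  assumes "\<beta> > 0"
    and "\<forall>x>0. L x > 0"
    and "slowly_varying L"
    and "eventually (\<lambda>n::nat. L (exp (real n)) \<le> L (exp (real (Suc n)))) sequentially"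
  shows "((\<lambda>y. g1_tilde \<beta> L y - g1 \<beta> L y) \<longlongrightarrow> 0) at_top"
proof -
  note b = assms(1)
  have Lpos: "\<And>x. L (exp x) > 0" using assms(2) by simp
  define a where "a = lowpt \<beta> L"
  define h where "h = (\<lambda>n::nat. ln (L (exp (2 * real n))) - ln (L (exp (2 * real n - 2))))"
  have aSuc: "a (Suc n) = a n + 1 + h n / (2*\<beta>)" for n
    unfolding a_def lowpt_def h_def using b by (simp add: field_simps)
  obtain N where N: "\<And>n. n \<ge> N \<Longrightarrow> L (exp (real n)) \<le> L (exp (real (Suc n)))"
    using assms(4) unfolding eventually_sequentially by blast
  define N0 where "N0 = N + 2"
  have hpos: "h n \<ge> 0" if "n \<ge> N0" for n
  proof -
    have n2: "n \<ge> 2" "2*n-2 \<ge> N" using that N0_def by auto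
    have e1: "real (2*n-2) = 2 * real n - 2" "real (Suc (2*n-2)) = 2 * real n - 1"
      "real (Suc (Suc (2*n-2))) = 2 * real n" using n2 by (auto simp: of_nat_diff)
    have "L (exp (real (2*n-2))) \<le> L (exp (real (Suc (2*n-2))))" using N n2 by blast
    also have "\<dots> \<le> L (exp (real (Suc (Suc (2*n-2)))))" using N[of "Suc (2*n-2)"] n2 by simp
    finally have "L (exp (2 * real n - 2)) \<le> L (exp (2 * real n))"
      unfolding e1 .
    then show ?thesis unfolding h_def using Lpos by (simp add: ln_le_cancel_iff)
  qed
  have astep: "a (Suc n) \<ge> a n + 1" if "n \<ge> N0" for n
    using aSuc[of n] hpos[OF that] b by simp
  have amono: "a i + (real j - real i) \<le> a j" if "N0 \<le> i" "i \<le> j" for i j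
    using that(2)
  proof (induction j rule: dec_induct)
    case base then show ?case by simp
  next
    case (step m) then show ?case using astep[of m] that by simp
  qed
  have hlim: "h \<longlonglongrightarrow> 0"
  proof -
    have sv: "((\<lambda>x. L (exp 2 * x) / L x) \<longlongrightarrow> 1) at_top"
      using assms(3) unfolding slowly_varying_def by auto
    have f: "filterlim (\<lambda>n::nat. exp (2 * real n - 2)) at_top sequentially"
      by real_asymp
    have "((\<lambda>n::nat. L (exp 2 * exp (2 * real n - 2)) / L (exp (2 * real n - 2))) \<longlongrightarrow> 1) sequentially"
      using filterlim_compose[OF sv f] .
    then have "((\<lambda>n::nat. ln (L (exp 2 * exp (2 * real n - 2)) / L (exp (2 * real n - 2)))) \<longlongrightarrow> ln 1) sequentially"
      by (rule tendsto_ln) simp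
    moreover have "ln (L (exp 2 * exp (2 * real n - 2)) / L (exp (2 * real n - 2))) = h n" for n
    proof -
      have "exp 2 * exp (2 * real n - 2) = exp (2 * real n)" by (simp add: mult_exp_exp)
      then show ?thesis unfolding h_def using Lpos[of "2 * real n"] Lpos[of "2 * real n - 2"] by (simp add: ln_div)
    qed
    ultimately show ?thesis by simp
  qed
  show ?thesis
  proof (rule tendstoI)
    fix e :: real assume e: "e > 0"
    have "((\<lambda>n. h n / (2*\<beta>)) \<longlonglongrightarrow> 0 / (2*\<beta>))" by (intro tendsto_divide hlim) (use b in auto)
    then have "eventually (\<lambda>n. dist (h n / (2*\<beta>)) 0 < e) sequentially"
      using e tendstoD by fastforce
    then obtain M where M: "\<And>n. n \<ge> M \<Longrightarrow> \<bar>h n / (2*\<beta>)\<bar> < e"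
      unfolding eventually_sequentially by auto
    define K where "K = max N0 M"
    define Y where "Y = Max ((\<lambda>n. a (Suc n)) ` {..K})"
    have Y: "a (Suc n) \<le> Y" if "n \<le> K" for n unfolding Y_def using that by auto
    have "\<forall>y\<ge>Y. dist (g1_tilde \<beta> L y - g1 \<beta> L y) 0 < e"
    proof (intro allI impI)
      fix y assume y: "y \<ge> Y"
      have aK: "a (Suc K) \<le> y" using Y[of K] y by simp
      define P where "P = (\<lambda>n. n \<ge> Suc K \<and> a n \<le> y)"
      have PK: "P (Suc K)" using aK P_def by simp
      have Pb: "\<forall>n. P n \<longrightarrow> id n < Suc K + nat \<lceil>y - a (Suc K)\<rceil> + 1"
      proof (intro allI impI)
        fix n assume "P n"
        then have n: "n \<ge> Suc K" "a n \<le> y" unfolding P_def by auto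
        have "a (Suc K) + (real n - real (Suc K)) \<le> a n"
          using amono[of "Suc K" n] n K_def by auto
        then have "real n \<le> real (Suc K) + (y - a (Suc K))" using n by simp
        moreover have "y - a (Suc K) \<le> real (nat \<lceil>y - a (Suc K)\<rceil>)" by linarith
        ultimately have "real n \<le> real (Suc K + nat \<lceil>y - a (Suc K)\<rceil>)" by simp
        then have "n \<le> Suc K + nat \<lceil>y - a (Suc K)\<rceil>" by (simp only: of_nat_le_iff)
        then show "id n < Suc K + nat \<lceil>y - a (Suc K)\<rceil> + 1" by simp
      qed
      obtain n where n: "P n" and ngr: "\<And>m. P m \<Longrightarrow> m \<le> n"
        using ex_has_greatest_nat[OF PK Pb] by auto
      have nK: "n \<ge> Suc K" and an: "a n \<le> y" using n P_def by auto
      have an1: "y < a (Suc n)"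
      proof (rule ccontr)
        assume "\<not> y < a (Suc n)"
        then have "P (Suc n)" using nK P_def by simp
        then show False using ngr by fastforce
      qed
      have uniq: "m = n" if m: "2 \<le> m" "a m \<le> y" "y < a (m+1)" for m
      proof -
        have "\<not> m \<le> K" using Y[of m] m y by auto
        then have mN: "m \<ge> N0" using K_def by auto
        have nN: "n \<ge> N0" using nK K_def by auto
        show ?thesis
        proof (rule ccontr)
          assume "m \<noteq> n"
          then consider "m < n" | "n < m" by linarith
          then show False
          proof cases
            case 1 then have "a (Suc m) \<le> a n" using amono[of "Suc m" n] mN by simp
            then show ?thesis using m an by simp
          next
            case 2 then have "a (Suc n) \<le> a m" using amono[of "Suc n" m] nN by simp
            then show ?thesis using m an1 by simp
          qed
        qed
      qed
      have n2: "2 \<le> n" using nK K_def N0_def by auto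
      have idx: "idx \<beta> L y = n"
        unfolding idx_def
      proof (rule the_equality)
        show "2 \<le> n \<and> lowpt \<beta> L n \<le> y \<and> y < lowpt \<beta> L (n + 1)"
          using n2 an an1 a_def by simp
      next
        fix m assume "2 \<le> m \<and> lowpt \<beta> L m \<le> y \<and> y < lowpt \<beta> L (m + 1)"
        then show "m = n" using uniq a_def by auto
      qed
      have hn: "h n \<ge> 0" "\<bar>h n / (2*\<beta>)\<bar> < e" using hpos[of n] M[of n] nK K_def by auto
      have an': "real n - 1 + ln (L (exp (2 * real n - 2))) / (2 * \<beta>) \<le> y"
        using an unfolding a_def lowpt_def .
      have an1': "y < real n + ln (L (exp (2 * real n))) / (2 * \<beta>)"
        using an1 aSuc[of n] unfolding a_def lowpt_def h_def using b by (simp add: field_simps)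
      have hdiv: "h n / (2*\<beta>) = ln (L (exp (2 * real n))) / (2 * \<beta>) - ln (L (exp (2 * real n - 2))) / (2 * \<beta>)"
        unfolding h_def by (simp add: diff_divide_distrib)
      have "\<bar>g1_tilde \<beta> L y - g1 \<beta> L y\<bar> \<le> h n / (2*\<beta>)"
      proof -
        have hp: "h n / (2*\<beta>) \<ge> 0" using hn b by simp
        show ?thesis
          unfolding g1_tilde_def g1_def idx Let_def using an' hdiv hp by (auto; linarith)
      qed
      then show "dist (g1_tilde \<beta> L y - g1 \<beta> L y) 0 < e" using hn b by (simp add: dist_real_def)
    qed
    then show "eventually (\<lambda>y. dist (g1_tilde \<beta> L y - g1 \<beta> L y) 0 < e) at_top"
      unfolding eventually_at_top_linorder by blast
  qed
qed

end
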